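(* Let $T$ be an MFQST with explicit bound $k$ on $n$ sources $z_1,\dots,z_n$ and sink $z_{BS}$. Then $$L(T)\ge\frac{1}{n+k+1}\sum_{i=1}^n|z_iz_{BS}|^2.$$
   Context: Let $Z=\{z_1,\dots,z_n\}\subset\mathbb{R}^2$ ($n\ge 1$) be a set of sources and $z_{BS}\in\mathbb{R}^2\setminus Z$ a sink; each source has supply $1$. A flow-dependent quadratic Steiner tree (FQST) consists of a finite set $S\subset\mathbb{R}^2$ of Steiner points and a tree $T$ with vertex set $Z\cup S\cup\{z_{BS}\}$ whose edges are directed towards $z_{BS}$. Every node other than the sink has exactly one out-edge, and the sink has none. Each edge $e$ carries a positive flow $f(e)$ such that: - at each source, the flow on its out-edge minus the total flow on its in-edges equals $1$; - at each Steiner point, the out-flow equals the total in-flow; - the sink receives total flow $n$. The cost is $L(T)=\sum_{e\in E(T)} f(e)|e|^2$. An MFQST with explicit bound $k$ minimises $L$ among all FQSTs with $|S|\le k$. *)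

theory Defs
  imports "HOL-Analysis.Analysis"
begin

type_synonym pt = "real^2"

text \<open>The tree is given by the successor map p: every vertex v other than the sink
  has the unique out-edge (v, p v); f v is the flow on that out-edge.
  Acyclicity / connectivity: iterating p from any vertex reaches the sink.\<close>

definition in_edges :: "pt set \<Rightarrow> pt \<Rightarrow> pt set \<Rightarrow> (pt \<Rightarrow> pt) \<Rightarrow> pt \<Rightarrow> pt set" where
  "in_edges Z zbs S p w = {u \<in> Z \<union> S. p u = w}"

definition is_FQST :: "pt set \<Rightarrow> pt \<Rightarrow> pt set \<Rightarrow> (pt \<Rightarrow> pt) \<Rightarrow> (pt \<Rightarrow> real) \<Rightarrow> bool" where
  "is_FQST Z zbs S p f \<longleftrightarrow>
     finite S \<and> S \<inter> Z = {} \<and> zbs \<notin> S \<and>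
     (\<forall>v \<in> Z \<union> S. p v \<in> Z \<union> S \<union> {zbs} \<and> f v > 0) \<and>
     (\<forall>v \<in> Z \<union> S \<union> {zbs}. \<exists>m. (p ^^ m) v = zbs) \<and>
     (\<forall>z \<in> Z. f z - (\<Sum>u \<in> in_edges Z zbs S p z. f u) = 1) \<and>
     (\<forall>s \<in> S. f s = (\<Sum>u \<in> in_edges Z zbs S p s. f u)) \<and>
     (\<Sum>u \<in> in_edges Z zbs S p zbs. f u) = real (card Z)"

definition FQST_cost :: "pt set \<Rightarrow> pt set \<Rightarrow> (pt \<Rightarrow> pt) \<Rightarrow> (pt \<Rightarrow> real) \<Rightarrow> real" where
  "FQST_cost Z S p f = (\<Sum>v \<in> Z \<union> S. f v * (dist v (p v))\<^sup>2)"

definition is_MFQST :: "pt set \<Rightarrow> pt \<Rightarrow> nat \<Rightarrow> pt set \<Rightarrow> (pt \<Rightarrow> pt) \<Rightarrow> (pt \<Rightarrow> real) \<Rightarrow> bool" where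
  "is_MFQST Z zbs k S p f \<longleftrightarrow>
     is_FQST Z zbs S p f \<and> card S \<le> k \<and>
     (\<forall>S' p' f'. is_FQST Z zbs S' p' f' \<and> card S' \<le> k \<longrightarrow>
        FQST_cost Z S p f \<le> FQST_cost Z S' p' f')"

end

theory Submission
  imports Defs "HOL-Analysis.Analysis"
begin

locale fq =
  fixes Z S :: "(real^2) set" and zbs :: "real^2" and p :: "real^2 \<Rightarrow> real^2"
  assumes finZ: "finite Z" and finS: "finite S" and zbsnot: "zbs \<notin> Z \<union> S"
    and pin: "\<And>v. v \<in> Z \<union> S \<Longrightarrow> p v \<in> Z \<union> S \<union> {zbs}"
    and reach: "\<And>v. v \<in> Z \<union> S \<union> {zbs} \<Longrightarrow> \<exists>m. (p ^^ m) v = zbs"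
begin

definition d :: "real^2 \<Rightarrow> nat" where "d v = (LEAST m. (p ^^ m) v = zbs)"

lemma d_hit: assumes "v \<in> Z \<union> S \<union> {zbs}" shows "(p ^^ d v) v = zbs"
proof -
  from reach[OF assms] obtain m where "(p ^^ m) v = zbs" by blast
  then show ?thesis unfolding d_def by (rule LeastI)
qed

lemma d_min: "i < d v \<Longrightarrow> (p ^^ i) v \<noteq> zbs"
  unfolding d_def using not_less_Least by blast

lemma path_in: "v \<in> Z \<union> S \<Longrightarrow> i < d v \<Longrightarrow> (p ^^ i) v \<in> Z \<union> S"
proof (induction i)
  case 0 then show ?case by simp
next
  case (Suc i)
  then have "(p ^^ i) v \<in> Z \<union> S" by simp
  then have "p ((p ^^ i) v) \<in> Z \<union> S \<union> {zbs}" using pin by blast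
  moreover have "(p ^^ Suc i) v \<noteq> zbs" using d_min Suc.prems by blast
  ultimately show ?case by simp
qed

lemma path_inj: assumes v: "v \<in> Z \<union> S" shows "inj_on (\<lambda>i. (p ^^ i) v) {..<d v}"
proof (rule inj_onI, rule ccontr)
  fix i j assume i: "i \<in> {..<d v}" and j: "j \<in> {..<d v}" and eq: "(p ^^ i) v = (p ^^ j) v" and ne: "i \<noteq> j"
  have key: "\<And>i j. i < j \<Longrightarrow> j < d v \<Longrightarrow> (p ^^ i) v = (p ^^ j) v \<Longrightarrow> False"
  proof -
    fix i j assume ij: "i < j" "j < d v" "(p ^^ i) v = (p ^^ j) v"
    have "(p ^^ (d v - j + j)) v = (p ^^ (d v - j)) ((p ^^ j) v)" by (simp add: funpow_add)
    also have "\<dots> = (p ^^ (d v - j)) ((p ^^ i) v)" using ij by simp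
    also have "\<dots> = (p ^^ (d v - j + i)) v" by (simp add: funpow_add)
    finally have "(p ^^ (d v - j + i)) v = zbs" using d_hit v ij by simp
    moreover have "d v - j + i < d v" using ij by simp
    ultimately show False using d_min by blast
  qed
  show False
  proof (cases "i < j")
    case True then show ?thesis using key j eq by auto
  next
    case False then have "j < i" using ne by simp
    then show ?thesis using key[of j i] i eq by auto
  qed
qed

lemma d_bound: assumes v: "v \<in> Z \<union> S" shows "d v \<le> card (Z \<union> S)"
proof -
  have "card ((\<lambda>i. (p ^^ i) v) ` {..<d v}) = d v"
    using card_image[OF path_inj[OF v]] by simp
  moreover have "(\<lambda>i. (p ^^ i) v) ` {..<d v} \<subseteq> Z \<union> S" using path_in v by auto
  then have "card ((\<lambda>i. (p ^^ i) v) ` {..<d v}) \<le> card (Z \<union> S)"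
    using finZ finS by (intro card_mono) auto
  ultimately show ?thesis by simp
qed

lemma d_child: assumes u: "u \<in> Z \<union> S" shows "d u = Suc (d (p u))"
proof -
  have h: "(p ^^ d u) u = zbs" using d_hit u by simp
  have "d u \<noteq> 0"
  proof
    assume "d u = 0" then have "u = zbs" using h by simp
    then show False using u zbsnot by simp
  qed
  then obtain m where m: "d u = Suc m" using not0_implies_Suc by blast
  have "(p ^^ m) (p u) = zbs" using h m by (simp add: funpow_Suc_right del: funpow.simps)
  then have "d (p u) \<le> m" unfolding d_def by (rule Least_le)
  moreover have "(p ^^ d (p u)) (p u) = zbs" using d_hit pin u by blast
  then have "(p ^^ Suc (d (p u))) u = zbs" by (simp add: funpow_Suc_right del: funpow.simps)
  then have "d u \<le> Suc (d (p u))" unfolding d_def by (rule Least_le)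
  ultimately show ?thesis using m by simp
qed

definition P :: "real^2 \<Rightarrow> (real^2) set" where "P v = {z \<in> Z. \<exists>i<d z. (p ^^ i) z = v}"

lemma P_sub: assumes v: "v \<in> Z \<union> S"
  shows "P v \<subseteq> ({v} \<inter> Z) \<union> (\<Union>u\<in>{u \<in> Z \<union> S. p u = v}. P u)"
proof
  fix z assume z: "z \<in> P v"
  then obtain i where zi: "z \<in> Z" "i < d z" "(p ^^ i) z = v" unfolding P_def by blast
  show "z \<in> ({v} \<inter> Z) \<union> (\<Union>u\<in>{u \<in> Z \<union> S. p u = v}. P u)"
  proof (cases i)
    case 0 then show ?thesis using zi by simp
  next
    case (Suc j)
    let ?u = "(p ^^ j) z"
    have "?u \<in> Z \<union> S" using path_in zi Suc by simp
    moreover have "p ?u = v" using zi Suc by simp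
    moreover have "z \<in> P ?u" unfolding P_def using zi Suc
      by (intro CollectI conjI exI[of _ j]) auto
    ultimately show ?thesis by blast
  qed
qed

lemma finP: "finite (P v)" unfolding P_def using finZ by simp

lemma flow_bound:
  fixes f :: "real^2 \<Rightarrow> real"
  assumes srcZ: "\<And>z. z \<in> Z \<Longrightarrow> f z - (\<Sum>u\<in>{u \<in> Z \<union> S. p u = z}. f u) = 1"
    and srcS: "\<And>s. s \<in> S \<Longrightarrow> f s = (\<Sum>u\<in>{u \<in> Z \<union> S. p u = s}. f u)"
  shows "v \<in> Z \<union> S \<Longrightarrow> real (card (P v)) \<le> f v"
proof (induction "card (Z \<union> S) - d v" arbitrary: v rule: less_induct)
  case less
  let ?C = "{u \<in> Z \<union> S. p u = v}"
  have finC: "finite ?C" using finZ finS by simp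
  have IH: "\<And>u. u \<in> ?C \<Longrightarrow> real (card (P u)) \<le> f u"
  proof -
    fix u assume u: "u \<in> ?C"
    then have "d u = Suc (d v)" using d_child by auto
    moreover have "d u \<le> card (Z \<union> S)" using d_bound u by auto
    ultimately have "card (Z \<union> S) - d u < card (Z \<union> S) - d v" by simp
    then show "real (card (P u)) \<le> f u" using less.hyps u by blast
  qed
  have fv: "f v = (if v \<in> Z then 1 else 0) + (\<Sum>u\<in>?C. f u)"
    using less.prems srcZ srcS zbsnot by (cases "v \<in> Z") (auto simp: algebra_simps)
  have "card (P v) \<le> card (({v} \<inter> Z) \<union> (\<Union>u\<in>?C. P u))"
    using P_sub[OF less.prems] finC finP by (intro card_mono) auto
  also have "\<dots> \<le> card ({v} \<inter> Z) + card (\<Union>u\<in>?C. P u)" by (rule card_Un_le)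
  also have "card (\<Union>u\<in>?C. P u) \<le> (\<Sum>u\<in>?C. card (P u))" by (rule card_UN_le[OF finC])
  finally have "card (P v) \<le> card ({v} \<inter> Z) + (\<Sum>u\<in>?C. card (P u))" by simp
  then have "real (card (P v)) \<le> real (card ({v} \<inter> Z)) + (\<Sum>u\<in>?C. real (card (P u)))"
    by (simp only: of_nat_le_iff of_nat_add of_nat_sum[symmetric])
  also have "real (card ({v} \<inter> Z)) = (if v \<in> Z then 1 else 0)" by simp
  also have "(\<Sum>u\<in>?C. real (card (P u))) \<le> (\<Sum>u\<in>?C. f u)"
    by (rule sum_mono) (rule IH)
  finally show ?case using fv by simp
qed

end


lemma (in fq) path_bound:
  fixes N :: real
  assumes z: "z \<in> Z" and N: "N > 0" "real (d z) \<le> N"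
  shows "(dist z zbs)\<^sup>2 / N \<le> (\<Sum>i<d z. (dist ((p ^^ i) z) (p ((p ^^ i) z)))\<^sup>2)"
proof -
  define a where "a i = dist ((p ^^ i) z) ((p ^^ Suc i) z)" for i
  have tri: "dist z ((p ^^ m) z) \<le> (\<Sum>i<m. a i)" for m
  proof (induction m)
    case 0 then show ?case by simp
  next
    case (Suc m)
    have "dist z ((p ^^ Suc m) z) \<le> dist z ((p ^^ m) z) + a m"
      unfolding a_def by (rule dist_triangle)
    then show ?case using Suc by simp
  qed
  have "dist z zbs \<le> (\<Sum>i<d z. a i)" using tri[of "d z"] d_hit z by simp
  then have "(dist z zbs)\<^sup>2 \<le> (\<Sum>i<d z. a i)\<^sup>2"
    by (intro power_mono) auto
  also have "\<dots> \<le> (\<Sum>i<d z. (a i)\<^sup>2) * real (card {..<d z})" by (rule sum_squared_le_sum_of_squares)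
  also have "\<dots> \<le> (\<Sum>i<d z. (a i)\<^sup>2) * N"
    by (rule mult_left_mono) (use N in \<open>auto intro: sum_nonneg\<close>)
  finally have "(dist z zbs)\<^sup>2 \<le> (\<Sum>i<d z. (a i)\<^sup>2) * N" .
  then have "(dist z zbs)\<^sup>2 / N \<le> (\<Sum>i<d z. (a i)\<^sup>2)"
    using N(1) by (simp add: divide_le_eq)
  moreover have "(\<Sum>i<d z. (a i)\<^sup>2) = (\<Sum>i<d z. (dist ((p ^^ i) z) (p ((p ^^ i) z)))\<^sup>2)"
    unfolding a_def by simp
  ultimately show ?thesis by simp
qed

theorem mainTheorem15:
  fixes Z :: "(real^2) set" and zbs :: "real^2" and k :: nat
    and S :: "(real^2) set" and p :: "real^2 \<Rightarrow> real^2" and f :: "real^2 \<Rightarrow> real"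
  assumes "finite Z" and "card Z \<ge> 1" and "zbs \<notin> Z"
    and "is_MFQST Z zbs k S p f"
  shows "FQST_cost Z S p f \<ge> (1 / real (card Z + k + 1)) * (\<Sum>z \<in> Z. (dist z zbs)\<^sup>2)"
proof -
  let ?N = "real (card Z + k + 1)"
  have M: "is_FQST Z zbs S p f" "card S \<le> k" using assms(4) unfolding is_MFQST_def by auto
  note F = M(1)[unfolded is_FQST_def in_edges_def]
  interpret fq Z S zbs p
    using F assms(1,3) by unfold_locales auto
  define c where "c v = (dist v (p v))\<^sup>2" for v
  have finZS: "finite (Z \<union> S)" using finZ finS by simp
  have cardZS: "card (Z \<union> S) \<le> card Z + k" using card_Un_le[of Z S] M(2) by linarith
  have Npos: "?N > 0" by simp
  have fb: "\<And>v. v \<in> Z \<union> S \<Longrightarrow> real (card (P v)) \<le> f v"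
    by (rule flow_bound) (use F in auto)
  have h1: "FQST_cost Z S p f = (\<Sum>v\<in>Z \<union> S. f v * c v)" unfolding FQST_cost_def c_def by simp
  have h2: "(\<Sum>v\<in>Z \<union> S. real (card (P v)) * c v) \<le> (\<Sum>v\<in>Z \<union> S. f v * c v)"
    by (rule sum_mono, rule mult_right_mono) (auto simp: c_def fb)
  have "(\<Sum>v\<in>Z \<union> S. real (card (P v)) * c v) = (\<Sum>v\<in>Z \<union> S. \<Sum>z\<in>Z. if z \<in> P v then c v else 0)"
  proof (rule sum.cong[OF refl])
    fix v
    have "real (card (P v)) * c v = (\<Sum>z\<in>P v. c v)" by simp
    also have "\<dots> = (\<Sum>z\<in>Z. if z \<in> P v then c v else 0)"
      unfolding P_def using sum.inter_filter[OF finZ, of "\<lambda>_. c v" "\<lambda>z. \<exists>i<d z. (p ^^ i) z = v"]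
      by simp
    finally show "real (card (P v)) * c v = (\<Sum>z\<in>Z. if z \<in> P v then c v else 0)" .
  qed
  also have "\<dots> = (\<Sum>z\<in>Z. \<Sum>v\<in>Z \<union> S. if z \<in> P v then c v else 0)" by (rule sum.swap)
  also have "\<dots> = (\<Sum>z\<in>Z. \<Sum>i<d z. c ((p ^^ i) z))"
  proof (rule sum.cong[OF refl])
    fix z assume z: "z \<in> Z"
    have "(\<Sum>v\<in>Z \<union> S. if z \<in> P v then c v else 0) = (\<Sum>v\<in>{v \<in> Z \<union> S. z \<in> P v}. c v)"
      using sum.inter_filter[OF finZS, of c "\<lambda>v. z \<in> P v"] by simp
    also have "{v \<in> Z \<union> S. z \<in> P v} = (\<lambda>i. (p ^^ i) z) ` {..<d z}"
      unfolding P_def using z path_in by auto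
    also have "(\<Sum>v\<in>(\<lambda>i. (p ^^ i) z) ` {..<d z}. c v) = (\<Sum>i<d z. c ((p ^^ i) z))"
      using sum.reindex[OF path_inj, of z c] z by simp
    finally show "(\<Sum>v\<in>Z \<union> S. if z \<in> P v then c v else 0) = (\<Sum>i<d z. c ((p ^^ i) z))" .
  qed
  finally have h3: "(\<Sum>v\<in>Z \<union> S. real (card (P v)) * c v) = (\<Sum>z\<in>Z. \<Sum>i<d z. c ((p ^^ i) z))" .
  have h4: "(\<Sum>z\<in>Z. (dist z zbs)\<^sup>2 / ?N) \<le> (\<Sum>z\<in>Z. \<Sum>i<d z. c ((p ^^ i) z))"
  proof (rule sum_mono)
    fix z assume z: "z \<in> Z"
    have "d z \<le> card (Z \<union> S)" using d_bound z by simp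
    then have "real (d z) \<le> ?N" using cardZS by simp
    from path_bound[OF z Npos this]
    show "(dist z zbs)\<^sup>2 / ?N \<le> (\<Sum>i<d z. c ((p ^^ i) z))" unfolding c_def .
  qed
  have h5: "(1 / ?N) * (\<Sum>z\<in>Z. (dist z zbs)\<^sup>2) = (\<Sum>z\<in>Z. (dist z zbs)\<^sup>2 / ?N)"
    by (simp add: sum_divide_distrib)
  show ?thesis using h1 h2 h3 h4 h5 by linarith
qed

end
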